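(* For $k\in\mathbb N^+$, $\mu\in\mathbb R$, $s^2>0$, let $g(x;k,\mu,s^2)$ be the probability density proportional to $I(x\ge0)\,x^{2k}f(x;\mu,s^2)$, where $f(\cdot;\mu,s^2)$ is the $N(\mu,s^2)$ density. Let $\hat\mu=\arg\max_x g(x;k,\mu,s^2)$ and $\hat s^2=-\big(\partial^2\log g/\partial x^2|_{x=\hat\mu}\big)^{-1}$, and let $f(\cdot;\hat\mu,\hat s^2)$ be the Laplace approximation. For $m>0$ define $V(x;k,m)=2k\big[\log(x/m)-(x/m-1)+\tfrac12(x/m-1)^2\big]$ for $x>0$ and $V(x;k,m)=-\infty$ for $x\le0$. Then the total variation distance satisfies $$d_{TV}\big(g(\cdot;k,\mu,s^2),f(\cdot;\hat\mu,\hat s^2)\big)\le\max\Big(\int_1^{\infty}\big[e^{V(x;k,1)}-1\big]f(x;1,\tfrac1{2k})\,dx,\ \int_{-\infty}^{1}\big[1-e^{V(x;k,1)}\big]f(x;1,\tfrac1{2k})\,dx\Big),$$ a bound that does not depend on $\mu$ or $s^2$.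
   Context: Here $d_{TV}(p,q)=\int (p-q)^+\,dx$ for densities $p,q$. Explicitly, $\hat\mu=\frac{\mu/s^2+\sqrt{\mu^2/s^4+8k/s^2}}{2/s^2}$ and $\hat s^2=(2k/\hat\mu^2+1/s^2)^{-1}$. *)

theory Defs
  imports "HOL-Probability.Probability"
begin

definition gauss :: "real \<Rightarrow> real \<Rightarrow> real \<Rightarrow> real" where
  "gauss mu s2 x = normal_density mu (sqrt s2) x"

definition gZ :: "nat \<Rightarrow> real \<Rightarrow> real \<Rightarrow> real" where
  "gZ k mu s2 = (LINT x|lborel. indicator {0..} x * x ^ (2*k) * gauss mu s2 x)"

definition gdens :: "nat \<Rightarrow> real \<Rightarrow> real \<Rightarrow> real \<Rightarrow> real" where
  "gdens k mu s2 x = indicator {0..} x * x ^ (2*k) * gauss mu s2 x / gZ k mu s2"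

(* mode of g (explicit argmax) *)
definition mu_hat :: "nat \<Rightarrow> real \<Rightarrow> real \<Rightarrow> real" where
  "mu_hat k mu s2 = (mu / s2 + sqrt (mu^2 / s2^2 + 8 * real k / s2)) / (2 / s2)"

(* -(d^2/dx^2 log g at mu_hat)^(-1) *)
definition s2_hat :: "nat \<Rightarrow> real \<Rightarrow> real \<Rightarrow> real" where
  "s2_hat k mu s2 = inverse (2 * real k / (mu_hat k mu s2)^2 + 1 / s2)"

definition dTV :: "(real \<Rightarrow> real) \<Rightarrow> (real \<Rightarrow> real) \<Rightarrow> real" where
  "dTV p q = (LINT x|lborel. max 0 (p x - q x))"

(* V(x;k,m), real-valued for x > 0; V = -infinity for x <= 0 *)
definition Vfun :: "nat \<Rightarrow> real \<Rightarrow> real \<Rightarrow> real" where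
  "Vfun k m x = 2 * real k * (ln (x/m) - (x/m - 1) + (1/2) * (x/m - 1)^2)"

(* e^{V(x;k,m)}, with the convention e^{-infinity} = 0 *)
definition expV :: "nat \<Rightarrow> real \<Rightarrow> real \<Rightarrow> real" where
  "expV k m x = (if x > 0 then exp (Vfun k m x) else 0)"

end

theory Submission
  imports Defs
begin

lemma nd_affine:
  assumes "t > 0"
  shows "normal_density m t (m + t * z) = std_normal_density z / t"
proof -
  have "sqrt (2 * pi * t\<^sup>2) = sqrt (2*pi) * t" using assms by (simp add: real_sqrt_mult)
  moreover have "(m + t * z - m)\<^sup>2 / (2 * t\<^sup>2) = z\<^sup>2 / 2" using assms by (simp add: power_mult_distrib field_simps)
  ultimately show ?thesis unfolding normal_density_def by (simp add: field_simps)
qed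

lemma transfer_int:
  fixes H :: "real \<Rightarrow> real"
  assumes "t > 0"
  shows "(\<integral>x. H ((x - m) / t) * normal_density m t x \<partial>lborel) = (\<integral>z. H z * std_normal_density z \<partial>lborel)"
proof -
  have "(\<integral>x. H ((x - m) / t) * normal_density m t x \<partial>lborel)
      = \<bar>t\<bar> *\<^sub>R (\<integral>z. H ((m + t * z - m) / t) * normal_density m t (m + t * z) \<partial>lborel)"
    using assms by (intro lborel_integral_real_affine) simp
  also have "\<dots> = t * (\<integral>z. (H z * std_normal_density z) / t \<partial>lborel)"
    using assms by (simp add: nd_affine)
  also have "\<dots> = (\<integral>z. H z * std_normal_density z \<partial>lborel)"
    using assms by simp
  finally show ?thesis .
qed

lemma transfer_integrable:
  fixes H :: "real \<Rightarrow> real"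
  assumes "t > 0"
  shows "integrable lborel (\<lambda>x. H ((x - m) / t) * normal_density m t x) \<longleftrightarrow> integrable lborel (\<lambda>z. H z * std_normal_density z)"
proof -
  have "integrable lborel (\<lambda>x. H ((x - m) / t) * normal_density m t x) \<longleftrightarrow>
     integrable lborel (\<lambda>z. H ((m + t * z - m) / t) * normal_density m t (m + t * z))"
    using assms by (intro lborel_integrable_real_affine_iff[symmetric]) simp
  also have "\<dots> \<longleftrightarrow> integrable lborel (\<lambda>z. (1/t) * (H z * std_normal_density z))"
    using assms by (simp add: nd_affine)
  also have "\<dots> \<longleftrightarrow> integrable lborel (\<lambda>z. H z * std_normal_density z)"
    using assms by (simp add: divide_inverse integrable_mult_left_iff)
  finally show ?thesis .
qed

lemma Vfun_mono:
  assumes "0 < x" "x \<le> y"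
  shows "Vfun k 1 x \<le> Vfun k 1 y"
proof (rule DERIV_nonneg_imp_nondecreasing[OF assms(2)])
  fix t assume t: "x \<le> t" "t \<le> y"
  then have tp: "t > 0" using assms by simp
  have "((\<lambda>t. Vfun k 1 t) has_real_derivative 2 * real k * (1/t - 1 + (t - 1))) (at t)"
    unfolding Vfun_def using tp
    by (auto intro!: derivative_eq_intros simp: field_simps power2_eq_square)
  moreover have "1/t - 1 + (t - 1) = (t-1)^2 / t" using tp by (simp add: field_simps power2_eq_square)
  ultimately show "\<exists>d. ((\<lambda>t. Vfun k 1 t) has_real_derivative d) (at t) \<and> 0 \<le> d"
    using tp by (intro exI[of _ "2 * real k * (1/t - 1 + (t - 1))"]) auto
qed

lemma expV_mono: "x \<le> y \<Longrightarrow> expV k 1 x \<le> expV k 1 y"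
  unfolding expV_def using Vfun_mono[of x y k] by auto

lemma expV_nonneg: "0 \<le> expV k m x"
  unfolding expV_def by auto

lemma expV_one: "expV k 1 1 = 1"
  unfolding expV_def Vfun_def by simp

lemma expV_ge1: "1 \<le> y \<Longrightarrow> 1 \<le> expV k 1 y"
  using expV_mono[of 1 y k] expV_one[of k] by simp

lemma expV_le1: "y \<le> 1 \<Longrightarrow> expV k 1 y \<le> 1"
  using expV_mono[of y 1 k] expV_one[of k] by simp

lemma expV_scale: "m > 0 \<Longrightarrow> expV k m x = expV k 1 (x / m)"
  unfolding expV_def Vfun_def by (simp add: zero_less_divide_iff)

lemma expV_meas[measurable]: "expV k m \<in> borel_measurable borel"
  unfolding expV_def[abs_def] Vfun_def by measurable

lemma exp_moment_integrable:
  fixes l :: real assumes "l > 0"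
  shows "integrable lborel (\<lambda>y. indicator {0..} y * (exp (- l * y) * y ^ n))"
proof -
  have "integrable lborel (\<lambda>y. erlang_density 0 l y * y ^ n)"
  proof (rule integrableI_nonneg)
    show "AE x in lborel. 0 \<le> erlang_density 0 l x * x ^ n"
      using assms by (auto simp: erlang_density_def)
    show "(\<integral>\<^sup>+ x. ennreal (erlang_density 0 l x * x ^ n) \<partial>lborel) < \<infinity>"
      using assms by (simp add: nn_integral_erlang_ith_moment)
  qed measurable
  then have "integrable lborel (\<lambda>y. (1/l) * (erlang_density 0 l y * y ^ n))" by simp
  moreover have "(\<lambda>y. (1/l) * (erlang_density 0 l y * y ^ n)) = (\<lambda>y. indicator {0..} y * (exp (- l * y) * y ^ n))"
    using assms by (auto simp: erlang_density_def indicator_def)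
  ultimately show ?thesis by simp
qed
lemma expV_nd_eq:
  assumes k: "k \<ge> 1" and y: "y > 0"
  shows "expV k 1 y * normal_density 1 (sqrt (1/(2*real k))) y
       = exp (2*real k) / sqrt (2*pi*(1/(2*real k))) * (exp (- (2*real k) * y) * y ^ (2*k))"
proof -
  have kp: "real k > 0" using k by simp
  have s: "(sqrt (1/(2*real k)))\<^sup>2 = 1/(2*real k)" using kp by simp
  have yp: "y ^ (2*k) = exp (real (2*k) * ln y)"
    using y by (metis exp_ln_iff exp_of_nat_mult)
  have "expV k 1 y * normal_density 1 (sqrt (1/(2*real k))) y
      = 1 / sqrt (2*pi*(1/(2*real k))) * (exp (Vfun k 1 y) * exp (-(y - 1)\<^sup>2 / (2 * (1/(2*real k)))))"
    unfolding normal_density_def s expV_def using y by simp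
  also have "exp (Vfun k 1 y) * exp (-(y - 1)\<^sup>2 / (2 * (1/(2*real k)))) = exp (2*real k) * (exp (- (2*real k) * y) * exp (real (2*k) * ln y))"
    unfolding exp_add[symmetric] Vfun_def using kp
    by (intro arg_cong[where f=exp]) (simp add: field_simps power2_eq_square)
  finally show ?thesis using yp by simp
qed

lemma targetA_integrable:
  assumes k: "k \<ge> 1"
  shows "integrable lborel (\<lambda>y. indicator {1..} y * ((expV k 1 y - 1) * normal_density 1 (sqrt (1/(2*real k))) y))"
proof -
  let ?C = "exp (2*real k) / sqrt (2*pi*(1/(2*real k)))"
  let ?n = "normal_density 1 (sqrt (1/(2*real k)))"
  have "integrable lborel (\<lambda>y. indicator {1..} y * (?C * (indicator {0..} y * (exp (- (2*real k) * y) * y ^ (2*k)))) - indicator {1..} y * ?n y)"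
  proof (rule Bochner_Integration.integrable_diff)
    have "integrable lborel (\<lambda>y. ?C * (indicator {0..} y * (exp (- (2*real k) * y) * y ^ (2*k))))"
      using k exp_moment_integrable[of "2*real k" "2*k"] by (intro integrable_mult_right) auto
    from integrable_mult_indicator[OF _ this, of "{1..}"]
    show "integrable lborel (\<lambda>y. indicator {1..} y * (?C * (indicator {0..} y * (exp (- (2*real k) * y) * y ^ (2*k)))))"
      by simp
    from integrable_mult_indicator[OF _ integrable_normal_density, of "{1..}"]
    show "integrable lborel (\<lambda>y. indicator {1..} y * ?n y)" using k by simp
  qed
  moreover have "(\<lambda>y. indicator {1..} y * (?C * (indicator {0..} y * (exp (- (2*real k) * y) * y ^ (2*k)))) - indicator {1..} y * ?n y)
     = (\<lambda>y. indicator {1..} y * ((expV k 1 y - 1) * ?n y))"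
  proof
    fix y :: real
    show "indicator {1..} y * (?C * (indicator {0..} y * (exp (- (2*real k) * y) * y ^ (2*k)))) - indicator {1..} y * ?n y
       = indicator {1..} y * ((expV k 1 y - 1) * ?n y)"
      using expV_nd_eq[OF k, of y] by (cases "y \<ge> 1") (auto simp: indicator_def algebra_simps)
  qed
  ultimately show ?thesis by simp
qed
lemma mu_hat_alt:
  assumes "s2 > 0"
  shows "mu_hat k mu s2 = (mu + sqrt (mu^2 + 8 * real k * s2)) / 2"
proof -
  have "mu^2 / s2^2 + 8 * real k / s2 = (mu^2 + 8 * real k * s2) / s2^2"
    using assms by (simp add: field_simps power2_eq_square)
  then have "sqrt (mu^2 / s2^2 + 8 * real k / s2) = sqrt (mu^2 + 8 * real k * s2) / s2"
    using assms by (simp add: real_sqrt_divide)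
  then show ?thesis unfolding mu_hat_def using assms by (simp add: field_simps)
qed

lemma mu_hat_pos:
  assumes "s2 > 0" "k \<ge> 1"
  shows "mu_hat k mu s2 > 0"
proof -
  have "mu^2 < mu^2 + 8 * real k * s2" using assms by simp
  then have "sqrt (mu^2) < sqrt (mu^2 + 8 * real k * s2)" by (rule real_sqrt_less_mono)
  then have "\<bar>mu\<bar> < sqrt (mu^2 + 8 * real k * s2)" by simp
  then have "0 < mu + sqrt (mu^2 + 8 * real k * s2)" using abs_ge_minus_self[of mu] by linarith
  then show ?thesis using mu_hat_alt[OF assms(1), of k mu] by simp
qed

lemma mu_hat_eq:
  assumes "s2 > 0"
  shows "(mu_hat k mu s2)\<^sup>2 - mu * mu_hat k mu s2 = 2 * real k * s2"
proof -
  have nn: "0 \<le> mu^2 + 8 * real k * s2" using assms by simp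
  have "(sqrt (mu^2 + 8 * real k * s2))\<^sup>2 = mu^2 + 8 * real k * s2" using nn by simp
  then show ?thesis unfolding mu_hat_alt[OF assms] by (simp add: field_simps power2_eq_square)
qed

lemma s2_hat_pos:
  assumes "s2 > 0" "k \<ge> 1"
  shows "s2_hat k mu s2 > 0"
  unfolding s2_hat_def using assms mu_hat_pos[OF assms, of mu]
  by (intro positive_imp_inverse_positive add_pos_pos divide_pos_pos) auto

lemma sigma_le:
  assumes "s2 > 0" "k \<ge> 1"
  shows "sqrt (s2_hat k mu s2) / mu_hat k mu s2 \<le> sqrt (1 / (2 * real k))"
proof -
  let ?m = "mu_hat k mu s2"
  have m: "?m > 0" using mu_hat_pos[OF assms] .
  have e2: "?m^2 * (2 * real k / ?m^2 + 1 / s2) = 2 * real k + ?m^2 / s2"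
    using m by (simp add: field_simps)
  have "s2_hat k mu s2 / ?m^2 = 1 / (?m^2 * (2 * real k / ?m^2 + 1 / s2))"
    unfolding s2_hat_def by (simp add: divide_inverse mult.commute)
  also have "\<dots> = 1 / (2 * real k + ?m^2 / s2)"
    unfolding e2 ..
  also have "\<dots> \<le> 1 / (2 * real k)" using assms m
    by (intro divide_left_mono) (auto intro!: mult_pos_pos add_pos_nonneg)
  finally have "sqrt (s2_hat k mu s2 / ?m^2) \<le> sqrt (1 / (2 * real k))" by simp
  then show ?thesis using m by (simp add: real_sqrt_divide)
qed

lemma key_identity:
  fixes mu :: real
  assumes "s2 > 0" "k \<ge> 1" "x > 0"
  defines "m \<equiv> mu_hat k mu s2" and "S \<equiv> s2_hat k mu s2"
  shows "x^(2* k) * gauss mu s2 x * gauss m S m = m^(2* k) * gauss mu s2 m * (exp (Vfun k m x) * gauss m S x)"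
proof -
  have m: "m > 0" unfolding m_def using mu_hat_pos[OF assms(1,2)] .
  have S: "S > 0" unfolding S_def using s2_hat_pos[OF assms(1,2)] .
  have eq: "m^2 - mu * m = 2 * real k * s2" unfolding m_def using mu_hat_eq[OF assms(1)] .
  have iS: "1 / S = 2 * real k / m^2 + 1 / s2" unfolding S_def s2_hat_def m_def by (metis inverse_eq_divide inverse_inverse_eq)
  have xp: "x ^ (2* k) = exp (real (2* k) * ln x)" using assms(3) by (metis exp_ln_iff exp_of_nat_mult)
  have mp: "m ^ (2* k) = exp (real (2* k) * ln m)" using m by (metis exp_ln_iff exp_of_nat_mult)
  have g: "gauss u v w = 1 / sqrt (2 * pi * v) * exp (- (w - u)\<^sup>2 / (2 * v))" if "v > 0" for u v w
    unfolding gauss_def normal_density_def using that by simp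
  have ex: "real (2* k) * ln x + (- (x - mu)\<^sup>2 / (2* s2)) + (- (m - m)\<^sup>2/(2* S))
      = real (2* k) * ln m + (- (m - mu)\<^sup>2 / (2* s2)) + (Vfun k m x + (- (x - m)\<^sup>2/(2* S)))"
  proof -
    have l: "ln (x/m) = ln x - ln m" using m assms(3) by (simp add: ln_div)
    have a: "(x - m)\<^sup>2/(2* S) = (x - m)\<^sup>2 * (2 * real k / m^2 + 1 / s2) / 2"
    proof -
      have "(x - m)\<^sup>2/(2 * S) = (x - m)\<^sup>2 * (1/S) / 2" by simp
      then show ?thesis unfolding iS .
    qed
    have b: "2 * real k * (- (x / m - 1) + 1 / 2 * (x / m - 1)\<^sup>2) - (x - m)\<^sup>2 * (2 * real k / m^2 + 1 / s2) / 2
        = ((m - mu)\<^sup>2 - (x - mu)\<^sup>2) / (2* s2)"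
    proof -
      have "2 * real k = m * (m - mu) / s2" using eq assms(1) by (simp add: field_simps power2_eq_square)
      then have "2 * real k * (- (x / m - 1) + 1 / 2 * (x / m - 1)\<^sup>2) - (x - m)\<^sup>2 * (2 * real k / m^2 + 1 / s2) / 2
         = m * (m - mu) / s2 * (- (x / m - 1) + 1 / 2 * (x / m - 1)\<^sup>2) - (x - m)\<^sup>2 * (m * (m - mu) / s2 / m^2 + 1 / s2) / 2"
        by simp
      also have "\<dots> = ((m - mu)\<^sup>2 - (x - mu)\<^sup>2) / (2* s2)"
        using m assms(1) by (simp add: field_simps power2_eq_square)
      finally show ?thesis .
    qed
    have V: "Vfun k m x = real (2*k) * (ln x - ln m) + 2 * real k * (- (x / m - 1) + 1 / 2 * (x / m - 1)\<^sup>2)"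
      unfolding Vfun_def l by (simp add: algebra_simps)
    have b': "2 * real k * (- (x / m - 1) + 1 / 2 * (x / m - 1)\<^sup>2) - (x - m)\<^sup>2/(2 * S) = (m - mu)\<^sup>2 / (2 * s2) - (x - mu)\<^sup>2 / (2 * s2)"
      using b unfolding a by (simp add: diff_divide_distrib)
    have z: "(m - m)\<^sup>2/(2 * S) = 0" by simp
    have n1: "- (x - mu)\<^sup>2 / (2 * s2) = - ((x - mu)\<^sup>2 / (2 * s2))"
      and n2: "- (m - mu)\<^sup>2 / (2 * s2) = - ((m - mu)\<^sup>2 / (2 * s2))"
      and n3: "- (x - m)\<^sup>2 / (2 * S) = - ((x - m)\<^sup>2 / (2 * S))"
      and n4: "- (m - m)\<^sup>2 / (2 * S) = 0"
      and n5: "real (2*k) * (ln x - ln m) = real (2*k) * ln x - real (2*k) * ln m"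
      by (simp_all add: right_diff_distrib)
    show ?thesis unfolding V n1 n2 n3 n4 n5 using b' by linarith
  qed
  have "x^(2* k) * gauss mu s2 x * gauss m S m
      = 1 / sqrt (2* pi* s2) * (1 / sqrt (2* pi* S)) * exp (real (2* k) * ln x + (- (x - mu)\<^sup>2 / (2* s2)) + (- (m - m)\<^sup>2/(2* S)))"
    unfolding xp g[OF assms(1)] g[OF S] exp_add by simp
  also have "\<dots> = 1 / sqrt (2* pi* s2) * (1 / sqrt (2* pi* S)) * exp (real (2* k) * ln m + (- (m - mu)\<^sup>2 / (2* s2)) + (Vfun k m x + (- (x - m)\<^sup>2/(2* S))))"
    unfolding ex ..
  also have "\<dots> = m^(2* k) * gauss mu s2 m * (exp (Vfun k m x) * gauss m S x)"
    unfolding mp g[OF assms(1)] g[OF S] exp_add by simp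
  finally show ?thesis .
qed
lemma gdens_repr:
  fixes mu :: real
  assumes s: "s2 > 0" and k: "k \<ge> 1"
  defines "m \<equiv> mu_hat k mu s2" and "S \<equiv> s2_hat k mu s2"
  shows "gdens k mu s2 x = (m^(2*k) * gauss mu s2 m / (gZ k mu s2 * gauss m S m)) * (expV k m x * gauss m S x)"
proof (cases "x > 0")
  case True
  have S: "S > 0" unfolding S_def using s2_hat_pos[OF s k] .
  have qm: "gauss m S m > 0" unfolding gauss_def using S by (simp add: normal_density_pos)
  have "x^(2*k) * gauss mu s2 x = m^(2*k) * gauss mu s2 m * (exp (Vfun k m x) * gauss m S x) / gauss m S m"
    using key_identity[OF s k True, of mu] qm unfolding m_def S_def by (simp add: field_simps)
  then show ?thesis using True unfolding gdens_def expV_def by (simp add: field_simps)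
next
  case False
  have "indicator {0..} x * x ^ (2 * k) = (0::real)"
    using False k by (cases "x = 0") (auto simp: indicator_def zero_le_divide_iff divide_le_0_iff)
  then show ?thesis using False unfolding gdens_def expV_def by simp
qed

theorem mainTheorem6:
  fixes k :: nat and mu s2 :: real
  assumes "k \<ge> 1" and "s2 > 0"
  shows "dTV (gdens k mu s2) (gauss (mu_hat k mu s2) (s2_hat k mu s2))
    \<le> max (LINT x:{1..}|lborel. (expV k 1 x - 1) * gauss 1 (1 / (2 * real k)) x)
           (LINT x:{..1}|lborel. (1 - expV k 1 x) * gauss 1 (1 / (2 * real k)) x)"
proof -
  note k = assms(1) and s = assms(2)
  define m where "m = mu_hat k mu s2"
  define S where "S = s2_hat k mu s2"
  define t where "t = sqrt S"
  define \<sigma> where "\<sigma> = t / m"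
  define \<sigma>0 where "\<sigma>0 = sqrt (1 / (2 * real k))"
  define D where "D = m^(2*k) * gauss mu s2 m / (gZ k mu s2 * gauss m S m)"
  define q where "q = gauss m S"
  define e where "e = expV k m"
  define p where "p = gdens k mu s2"
  define HA where "HA = (\<lambda>c z. indicator {0..} z * (expV k 1 (1 + c * z) - 1) :: real)"
  define HB where "HB = (\<lambda>c z. indicator {..0} z * (1 - expV k 1 (1 + c * z)) :: real)"
  have m: "m > 0" unfolding m_def using mu_hat_pos[OF s k] .
  have S: "S > 0" unfolding S_def using s2_hat_pos[OF s k] .
  have t: "t > 0" unfolding t_def using S by simp
  have \<sigma>: "\<sigma> > 0" unfolding \<sigma>_def using t m by simp
  have \<sigma>0: "\<sigma>0 > 0" unfolding \<sigma>0_def using k by simp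
  have \<sigma>le: "\<sigma> \<le> \<sigma>0" unfolding \<sigma>_def \<sigma>0_def t_def S_def m_def using sigma_le[OF s k] .
  have q_nd: "q = normal_density m t" unfolding q_def gauss_def t_def ..
  have q_nn: "q x \<ge> 0" for x unfolding q_nd by simp
  have e_sc: "e x = expV k 1 (x / m)" for x unfolding e_def using expV_scale[OF m] .
  have p_repr: "p x = D * (e x * q x)" for x
    unfolding p_def D_def e_def q_def m_def S_def using gdens_repr[OF s k] .
  have gZ: "gZ k mu s2 \<ge> 0" unfolding gZ_def
    by (intro integral_nonneg_AE AE_I2) (auto simp: indicator_def gauss_def)
  have D0: "D \<ge> 0" unfolding D_def using gZ m by (auto simp: gauss_def intro!: divide_nonneg_nonneg mult_nonneg_nonneg)
  have g0: "gauss 1 (1 / (2 * real k)) = normal_density 1 \<sigma>0" unfolding gauss_def \<sigma>0_def ..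
  have tA: "(LINT x:{1..}|lborel. (expV k 1 x - 1) * gauss 1 (1 / (2 * real k)) x) = (\<integral>z. HA \<sigma>0 z * std_normal_density z \<partial>lborel)"
  proof -
    have "(LINT x:{1..}|lborel. (expV k 1 x - 1) * gauss 1 (1 / (2 * real k)) x)
        = (\<integral>y. HA \<sigma>0 ((y - 1) / \<sigma>0) * normal_density 1 \<sigma>0 y \<partial>lborel)"
      unfolding set_lebesgue_integral_def g0 HA_def using \<sigma>0
      by (intro Bochner_Integration.integral_cong) (auto simp: indicator_def zero_le_divide_iff divide_le_0_iff)
    also have "\<dots> = (\<integral>z. HA \<sigma>0 z * std_normal_density z \<partial>lborel)" using transfer_int[OF \<sigma>0] .
    finally show ?thesis .
  qed
  have tB: "(LINT x:{..1}|lborel. (1 - expV k 1 x) * gauss 1 (1 / (2 * real k)) x) = (\<integral>z. HB \<sigma>0 z * std_normal_density z \<partial>lborel)"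
  proof -
    have "(LINT x:{..1}|lborel. (1 - expV k 1 x) * gauss 1 (1 / (2 * real k)) x)
        = (\<integral>y. HB \<sigma>0 ((y - 1) / \<sigma>0) * normal_density 1 \<sigma>0 y \<partial>lborel)"
      unfolding set_lebesgue_integral_def g0 HB_def using \<sigma>0
      by (intro Bochner_Integration.integral_cong) (auto simp: indicator_def zero_le_divide_iff divide_le_0_iff)
    also have "\<dots> = (\<integral>z. HB \<sigma>0 z * std_normal_density z \<partial>lborel)" using transfer_int[OF \<sigma>0] .
    finally show ?thesis .
  qed
  have iA0: "integrable lborel (\<lambda>z. HA \<sigma>0 z * std_normal_density z)"
  proof -
    have "(\<lambda>y. indicator {1..} y * ((expV k 1 y - 1) * normal_density 1 \<sigma>0 y)) = (\<lambda>y. HA \<sigma>0 ((y - 1) / \<sigma>0) * normal_density 1 \<sigma>0 y)"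
      unfolding HA_def using \<sigma>0 by (auto simp: indicator_def zero_le_divide_iff divide_le_0_iff)
    then have "integrable lborel (\<lambda>y. HA \<sigma>0 ((y - 1) / \<sigma>0) * normal_density 1 \<sigma>0 y)"
      using targetA_integrable[OF k] unfolding \<sigma>0_def by simp
    then show ?thesis using transfer_integrable[OF \<sigma>0] by blast
  qed
  have HA_meas: "(\<lambda>z. HA c z * std_normal_density z) \<in> borel_measurable lborel" for c
    unfolding HA_def by measurable
  have HB_meas: "(\<lambda>z. HB c z * std_normal_density z) \<in> borel_measurable lborel" for c
    unfolding HB_def by measurable
  have HA_nn: "HA c z \<ge> 0" if "c \<ge> 0" for c z
    unfolding HA_def using that expV_ge1[of "1 + c * z" k] by (auto simp: indicator_def zero_le_divide_iff divide_le_0_iff)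
  have HB_nn: "HB c z \<ge> 0" if "c \<ge> 0" for c z
  proof -
    have "z \<le> 0 \<Longrightarrow> c * z \<le> 0" using that by (simp add: mult_nonneg_nonpos)
    then show ?thesis unfolding HB_def using expV_le1[of "1 + c * z" k] by (auto simp: indicator_def zero_le_divide_iff divide_le_0_iff)
  qed
  have HB_le1: "HB c z \<le> 1" for c z
    unfolding HB_def using expV_nonneg[of k 1 "1 + c * z"] by (auto simp: indicator_def zero_le_divide_iff divide_le_0_iff)
  have HA_mono: "HA \<sigma> z \<le> HA \<sigma>0 z" for z
  proof (cases "z \<ge> 0")
    case True
    then have "\<sigma> * z \<le> \<sigma>0 * z" using \<sigma>le by (simp add: mult_right_mono)
    then show ?thesis unfolding HA_def using True expV_mono[of "1 + \<sigma> * z" "1 + \<sigma>0 * z" k] by simp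
  qed (simp add: HA_def)
  have HB_mono: "HB \<sigma> z \<le> HB \<sigma>0 z" for z
  proof (cases "z \<le> 0")
    case True
    then have "\<sigma>0 * z \<le> \<sigma> * z" using \<sigma>le by (simp add: mult_right_mono_neg)
    then show ?thesis unfolding HB_def using True expV_mono[of "1 + \<sigma>0 * z" "1 + \<sigma> * z" k] by simp
  qed (simp add: HB_def)
  have iB0: "integrable lborel (\<lambda>z. HB \<sigma>0 z * std_normal_density z)"
    using \<sigma>0 HB_nn[of \<sigma>0] HB_le1[of \<sigma>0]
    by (intro Bochner_Integration.integrable_bound[OF integrable_normal_density[of 1 0] HB_meas])
       (auto intro!: mult_left_le_one_le)
  have iA: "integrable lborel (\<lambda>z. HA \<sigma> z * std_normal_density z)"
    using \<sigma> \<sigma>0 HA_nn HA_mono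
    by (intro Bochner_Integration.integrable_bound[OF iA0 HA_meas])
       (auto intro!: mult_right_mono)
  have iB: "integrable lborel (\<lambda>z. HB \<sigma> z * std_normal_density z)"
    using \<sigma> HB_nn[of \<sigma>] HB_le1[of \<sigma>]
    by (intro Bochner_Integration.integrable_bound[OF integrable_normal_density[of 1 0] HB_meas])
       (auto intro!: mult_left_le_one_le)
  have A_le: "(\<integral>z. HA \<sigma> z * std_normal_density z \<partial>lborel) \<le> (\<integral>z. HA \<sigma>0 z * std_normal_density z \<partial>lborel)"
    using iA0 HA_mono HA_nn[of \<sigma>0] \<sigma>0
    by (intro integral_mono_AE') (auto intro!: mult_right_mono)
  have B_le: "(\<integral>z. HB \<sigma> z * std_normal_density z \<partial>lborel) \<le> (\<integral>z. HB \<sigma>0 z * std_normal_density z \<partial>lborel)"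
    using iB0 HB_mono HB_nn[of \<sigma>0] \<sigma>0
    by (intro integral_mono_AE') (auto intro!: mult_right_mono)
  have xA: "(\<lambda>x. indicator {m..} x * (e x - 1) * q x) = (\<lambda>x. HA \<sigma> ((x - m) / t) * normal_density m t x)"
  proof
    fix x
    have "1 + \<sigma> * ((x - m) / t) = x / m" unfolding \<sigma>_def using m t by (simp add: field_simps)
    moreover have "indicator {0..} ((x - m) / t) = (indicator {m..} x :: real)" using t by (auto simp: indicator_def zero_le_divide_iff divide_le_0_iff)
    ultimately show "indicator {m..} x * (e x - 1) * q x = HA \<sigma> ((x - m) / t) * normal_density m t x"
      unfolding HA_def e_sc q_nd by simp
  qed
  have xB: "(\<lambda>x. indicator {..m} x * (1 - e x) * q x) = (\<lambda>x. HB \<sigma> ((x - m) / t) * normal_density m t x)"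
  proof
    fix x
    have "1 + \<sigma> * ((x - m) / t) = x / m" unfolding \<sigma>_def using m t by (simp add: field_simps)
    moreover have "indicator {..0} ((x - m) / t) = (indicator {..m} x :: real)" using t by (auto simp: indicator_def zero_le_divide_iff divide_le_0_iff)
    ultimately show "indicator {..m} x * (1 - e x) * q x = HB \<sigma> ((x - m) / t) * normal_density m t x"
      unfolding HB_def e_sc q_nd by simp
  qed
  have ixA: "integrable lborel (\<lambda>x. indicator {m..} x * (e x - 1) * q x)"
    unfolding xA using transfer_integrable[OF t] iA by blast
  have ixB: "integrable lborel (\<lambda>x. indicator {..m} x * (1 - e x) * q x)"
    unfolding xB using transfer_integrable[OF t] iB by blast
  have vA: "(\<integral>x. indicator {m..} x * (e x - 1) * q x \<partial>lborel) = (\<integral>z. HA \<sigma> z * std_normal_density z \<partial>lborel)"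
    unfolding xA using transfer_int[OF t] .
  have vB: "(\<integral>x. indicator {..m} x * (1 - e x) * q x \<partial>lborel) = (\<integral>z. HB \<sigma> z * std_normal_density z \<partial>lborel)"
    unfolding xB using transfer_int[OF t] .
  have e_ge: "x \<ge> m \<Longrightarrow> e x \<ge> 1" for x unfolding e_sc using m by (intro expV_ge1) simp
  have e_le: "x \<le> m \<Longrightarrow> e x \<le> 1" for x unfolding e_sc using m by (intro expV_le1) simp
  have e_nn: "e x \<ge> 0" for x unfolding e_def by (rule expV_nonneg)
  have dTV_eq: "dTV (gdens k mu s2) (gauss (mu_hat k mu s2) (s2_hat k mu s2)) = (\<integral>x. max 0 (p x - q x) \<partial>lborel)"
    unfolding dTV_def p_def q_def m_def S_def ..
  have TA: "(\<integral>z. HA \<sigma>0 z * std_normal_density z \<partial>lborel) \<le> max (LINT x:{1..}|lborel. (expV k 1 x - 1) * gauss 1 (1 / (2 * real k)) x)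
           (LINT x:{..1}|lborel. (1 - expV k 1 x) * gauss 1 (1 / (2 * real k)) x)"
    unfolding tA by simp
  have TB: "(\<integral>z. HB \<sigma>0 z * std_normal_density z \<partial>lborel) \<le> max (LINT x:{1..}|lborel. (expV k 1 x - 1) * gauss 1 (1 / (2 * real k)) x)
           (LINT x:{..1}|lborel. (1 - expV k 1 x) * gauss 1 (1 / (2 * real k)) x)"
    unfolding tB by simp
  show ?thesis
  proof (cases "D \<le> 1")
    case True
    have "(\<integral>x. max 0 (p x - q x) \<partial>lborel) \<le> (\<integral>x. indicator {m..} x * (e x - 1) * q x \<partial>lborel)"
    proof (intro integral_mono_AE' ixA AE_I2)
      fix x
      show "0 \<le> indicator {m..} x * (e x - 1) * q x"
        using e_ge[of x] q_nn[of x] by (auto simp: indicator_def zero_le_divide_iff divide_le_0_iff)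
      have De: "D * e x \<le> e x" using mult_right_mono[OF True e_nn[of x]] by simp
      show "max 0 (p x - q x) \<le> indicator {m..} x * (e x - 1) * q x"
      proof (cases "x \<ge> m")
        case True
        then have "p x - q x \<le> (e x - 1) * q x" unfolding p_repr using mult_right_mono[OF De q_nn[of x]]
          by (simp add: algebra_simps)
        then show ?thesis using True e_ge[of x] q_nn[of x] by (auto simp: indicator_def zero_le_divide_iff divide_le_0_iff)
      next
        case False
        then have h: "D * e x \<le> 1" using De e_le[of x] by simp
        have "p x - q x \<le> 0" unfolding p_repr using mult_right_mono[OF h q_nn[of x]]
          by (simp add: algebra_simps)
        then show ?thesis using False by (auto simp: indicator_def zero_le_divide_iff divide_le_0_iff)
      qed
    qed
    then show ?thesis using dTV_eq vA A_le TA by linarith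
  next
    case False
    have gZ0: "gZ k mu s2 \<noteq> 0" using False unfolding D_def by auto
    have eq_sum: "e x * q x = indicator {m..} x * (e x - 1) * q x - indicator {..m} x * (1 - e x) * q x + q x" for x
    proof (cases "x = m")
      case True
      have "e m = 1" unfolding e_sc using m by (simp add: expV_one)
      then show ?thesis using True by simp
    qed (auto simp: indicator_def algebra_simps)
    have iq: "integrable lborel q" unfolding q_nd using t by simp
    have ieq: "integrable lborel (\<lambda>x. e x * q x)"
      unfolding eq_sum using ixA ixB iq by (intro Bochner_Integration.integrable_add Bochner_Integration.integrable_diff)
    have ip: "integrable lborel p" unfolding p_repr using ieq by simp
    have int_p: "(\<integral>x. p x \<partial>lborel) = 1" unfolding p_def gdens_def
      using gZ0 by (simp add: gZ_def[symmetric])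
    have int_q: "(\<integral>x. q x \<partial>lborel) = 1" unfolding q_nd using t by simp
    have i1: "integrable lborel (\<lambda>x. max 0 (q x - p x))"
      using ip iq by (intro integrable_max Bochner_Integration.integrable_diff) auto
    have "(\<integral>x. max 0 (p x - q x) \<partial>lborel) = (\<integral>x. max 0 (q x - p x) + (p x - q x) \<partial>lborel)"
      by (intro Bochner_Integration.integral_cong) auto
    also have "\<dots> = (\<integral>x. max 0 (q x - p x) \<partial>lborel) + ((\<integral>x. p x \<partial>lborel) - (\<integral>x. q x \<partial>lborel))"
      using i1 ip iq by (simp add: Bochner_Integration.integral_add Bochner_Integration.integral_diff Bochner_Integration.integrable_diff)
    also have "\<dots> = (\<integral>x. max 0 (q x - p x) \<partial>lborel)" using int_p int_q by simp
    finally have sw: "(\<integral>x. max 0 (p x - q x) \<partial>lborel) = (\<integral>x. max 0 (q x - p x) \<partial>lborel)" .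
    have "(\<integral>x. max 0 (q x - p x) \<partial>lborel) \<le> (\<integral>x. indicator {..m} x * (1 - e x) * q x \<partial>lborel)"
    proof (intro integral_mono_AE' ixB AE_I2)
      fix x
      show "0 \<le> indicator {..m} x * (1 - e x) * q x"
        using e_le[of x] q_nn[of x] by (auto simp: indicator_def zero_le_divide_iff divide_le_0_iff)
      have De: "e x \<le> D * e x" using mult_right_mono[of 1 D "e x"] False e_nn[of x] by simp
      show "max 0 (q x - p x) \<le> indicator {..m} x * (1 - e x) * q x"
      proof (cases "x \<le> m")
        case True
        then have "q x - p x \<le> (1 - e x) * q x" unfolding p_repr using mult_right_mono[OF De q_nn[of x]]
          by (simp add: algebra_simps)
        then show ?thesis using True e_le[of x] q_nn[of x] by (auto simp: indicator_def zero_le_divide_iff divide_le_0_iff)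
      next
        case False
        then have h: "1 \<le> D * e x" using De e_ge[of x] by linarith
        have "q x - p x \<le> 0" unfolding p_repr using mult_right_mono[OF h q_nn[of x]]
          by (simp add: algebra_simps)
        then show ?thesis using False by (auto simp: indicator_def zero_le_divide_iff divide_le_0_iff)
      qed
    qed
    then show ?thesis using dTV_eq sw vB B_le TB by linarith
  qed
qed

end
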